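(* The set $\Sigma=\{m\in(0,\infty):\partial_\xi^3\theta(0;m)=0\}$ is discrete. Writing $\Sigma=\{m_k\}_{k\ge1}$ (in increasing order), there exist $K>0$ and $k_0\in\mathbb{Z}$ such that $m_k=(k+k_0+\tfrac12)\pi+O(k^{-1})$ for all $k\ge K$. Moreover, $$m_k^3\,\partial_\xi^5\theta(0;m_k)=(-1)^{k+k_0+1}\cdot 15+O(k^{-2})\qquad(k\to\infty),$$ so in particular $\partial_\xi^5\theta(0;m_k)\neq 0$ for all sufficiently large $k$.
   Context: $\omega(\xi;m)=\sqrt{m^2+\xi^2}$ and $\theta(\xi;m)=\arctan\!\Big(\frac{\xi\sin(\omega(\xi;m))}{\sqrt{m^2+\xi^2\cos^2(\omega(\xi;m))}}\Big)$ for $m>0$, $\xi\in\mathbb{R}$. *)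

theory Defs
  imports "HOL-Analysis.Analysis"
begin

definition omega :: "real \<Rightarrow> real \<Rightarrow> real" where
  "omega \<xi> m = sqrt (m^2 + \<xi>^2)"

definition theta :: "real \<Rightarrow> real \<Rightarrow> real" where
  "theta \<xi> m = arctan (\<xi> * sin (omega \<xi> m) / sqrt (m^2 + \<xi>^2 * (cos (omega \<xi> m))^2))"

definition dtheta0 :: "nat \<Rightarrow> real \<Rightarrow> real" where
  "dtheta0 n m = (deriv ^^ n) (\<lambda>\<xi>. theta \<xi> m) 0"

definition Sigma_set :: "real set" where
  "Sigma_set = {m. 0 < m \<and> dtheta0 3 m = 0}"

end

theory Submission
  imports Defs "HOL-Complex_Analysis.Complex_Analysis"
begin


lemma mult_nth_small:
  fixes a b :: "'a::comm_ring_1 fps"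
  shows "fps_nth (a*b) 1 = fps_nth a 0*fps_nth b 1 + fps_nth a 1*fps_nth b 0"
    "fps_nth (a*b) 2 = fps_nth a 0*fps_nth b 2 + fps_nth a 1*fps_nth b 1 + fps_nth a 2*fps_nth b 0"
    "fps_nth (a*b) 3 = fps_nth a 0*fps_nth b 3 + fps_nth a 1*fps_nth b 2 + fps_nth a 2*fps_nth b 1 + fps_nth a 3*fps_nth b 0"
    "fps_nth (a*b) 4 = fps_nth a 0*fps_nth b 4 + fps_nth a 1*fps_nth b 3 + fps_nth a 2*fps_nth b 2 + fps_nth a 3*fps_nth b 1 + fps_nth a 4*fps_nth b 0"
    "fps_nth (a*b) 5 = fps_nth a 0*fps_nth b 5 + fps_nth a 1*fps_nth b 4 + fps_nth a 2*fps_nth b 3 + fps_nth a 3*fps_nth b 2 + fps_nth a 4*fps_nth b 1 + fps_nth a 5*fps_nth b 0"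
  by (simp_all add: fps_mult_nth eval_nat_numeral atLeast0AtMost)

lemma pow2_nth:
  fixes b :: "'a::comm_ring_1 fps" assumes "fps_nth b 0 = 0"
  shows "fps_nth (b^2) 0 = 0" "fps_nth (b^2) 1 = 0" "fps_nth (b^2) 2 = (fps_nth b 1)^2" "fps_nth (b^2) 3 = 2*fps_nth b 1*fps_nth b 2"
   "fps_nth (b^2) 4 = 2*fps_nth b 1*fps_nth b 3 + (fps_nth b 2)^2" "fps_nth (b^2) 5 = 2*fps_nth b 1*fps_nth b 4 + 2*fps_nth b 2*fps_nth b 3"
  unfolding power2_eq_square[of b] apply (simp_all only: mult_nth_small assms fps_mult_nth_0 mult_zero_left mult_zero_right add_0_left add_0_right) by (simp_all add: eval_nat_numeral algebra_simps)

lemma pow3_nth: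
  fixes b :: "'a::comm_ring_1 fps" assumes "fps_nth b 0 = 0"
  shows "fps_nth (b^3) 0 = 0" "fps_nth (b^3) 1 = 0" "fps_nth (b^3) 2 = 0" "fps_nth (b^3) 3 = (fps_nth b 1)^3"
   "fps_nth (b^3) 4 = 3*(fps_nth b 1)^2*fps_nth b 2" "fps_nth (b^3) 5 = 3*(fps_nth b 1)^2*fps_nth b 3 + 3*fps_nth b 1*(fps_nth b 2)^2"
proof -
  have e: "b^3 = b * b^2" by (simp add: eval_nat_numeral)
  show "fps_nth (b^3) 0 = 0" "fps_nth (b^3) 1 = 0" "fps_nth (b^3) 2 = 0" "fps_nth (b^3) 3 = (fps_nth b 1)^3"
   "fps_nth (b^3) 4 = 3*(fps_nth b 1)^2*fps_nth b 2" "fps_nth (b^3) 5 = 3*(fps_nth b 1)^2*fps_nth b 3 + 3*fps_nth b 1*(fps_nth b 2)^2"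
    unfolding e apply (simp_all only: mult_nth_small pow2_nth[OF assms] assms fps_mult_nth_0 mult_zero_left mult_zero_right add_0_left add_0_right) by (simp_all add: eval_nat_numeral algebra_simps)
qed

lemma pow4_nth:
  fixes b :: "'a::comm_ring_1 fps" assumes "fps_nth b 0 = 0"
  shows "fps_nth (b^4) 0 = 0" "fps_nth (b^4) 1 = 0" "fps_nth (b^4) 2 = 0" "fps_nth (b^4) 3 = 0"
   "fps_nth (b^4) 4 = (fps_nth b 1)^4" "fps_nth (b^4) 5 = 4*(fps_nth b 1)^3*fps_nth b 2"
proof -
  have e: "b^4 = b * b^3" by (simp add: eval_nat_numeral)
  show "fps_nth (b^4) 0 = 0" "fps_nth (b^4) 1 = 0" "fps_nth (b^4) 2 = 0" "fps_nth (b^4) 3 = 0"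
   "fps_nth (b^4) 4 = (fps_nth b 1)^4" "fps_nth (b^4) 5 = 4*(fps_nth b 1)^3*fps_nth b 2"
    unfolding e apply (simp_all only: mult_nth_small pow3_nth[OF assms] assms fps_mult_nth_0 mult_zero_left mult_zero_right add_0_left add_0_right) by (simp_all add: eval_nat_numeral algebra_simps)
qed

lemma pow5_nth:
  fixes b :: "'a::comm_ring_1 fps" assumes "fps_nth b 0 = 0"
  shows "fps_nth (b^5) 0 = 0" "fps_nth (b^5) 1 = 0" "fps_nth (b^5) 2 = 0" "fps_nth (b^5) 3 = 0"
   "fps_nth (b^5) 4 = 0" "fps_nth (b^5) 5 = (fps_nth b 1)^5"
proof -
  have e: "b^5 = b * b^4" by (simp add: eval_nat_numeral)
  show "fps_nth (b^5) 0 = 0" "fps_nth (b^5) 1 = 0" "fps_nth (b^5) 2 = 0" "fps_nth (b^5) 3 = 0"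
   "fps_nth (b^5) 4 = 0" "fps_nth (b^5) 5 = (fps_nth b 1)^5"
    unfolding e apply (simp_all only: mult_nth_small pow4_nth[OF assms] assms fps_mult_nth_0 mult_zero_left mult_zero_right add_0_left add_0_right) by (simp_all add: eval_nat_numeral algebra_simps)
qed


lemma sum_upto5:
  "(\<Sum>i\<in>{0..1::nat}. f i) = f 0 + f 1"
  "(\<Sum>i\<in>{0..2::nat}. f i) = f 0 + f 1 + f 2"
  "(\<Sum>i\<in>{0..3::nat}. f i) = f 0 + f 1 + f 2 + f 3"
  "(\<Sum>i\<in>{0..4::nat}. f i) = f 0 + f 1 + f 2 + f 3 + f 4"
  "(\<Sum>i\<in>{0..5::nat}. f i) = f 0 + f 1 + f 2 + f 3 + f 4 + f 5"
  by (simp_all add: eval_nat_numeral atLeast0AtMost)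

lemma compose_nth_small:
  fixes a b :: "'a::comm_ring_1 fps"
  assumes "fps_nth b 0 = 0"
  shows "fps_nth (a oo b) 1 = fps_nth a 1*fps_nth b 1"
    "fps_nth (a oo b) 2 = fps_nth a 1*fps_nth b 2 + fps_nth a 2*(fps_nth b 1)^2"
    "fps_nth (a oo b) 3 = fps_nth a 1*fps_nth b 3 + 2*fps_nth a 2*fps_nth b 1*fps_nth b 2 + fps_nth a 3*(fps_nth b 1)^3"
    "fps_nth (a oo b) 4 = fps_nth a 1*fps_nth b 4 + fps_nth a 2*(2*fps_nth b 1*fps_nth b 3 + (fps_nth b 2)^2) + 3*fps_nth a 3*(fps_nth b 1)^2*fps_nth b 2 + fps_nth a 4*(fps_nth b 1)^4"
    "fps_nth (a oo b) 5 = fps_nth a 1*fps_nth b 5 + fps_nth a 2*(2*fps_nth b 1*fps_nth b 4 + 2*fps_nth b 2*fps_nth b 3) + fps_nth a 3*(3*(fps_nth b 1)^2*fps_nth b 3 + 3*fps_nth b 1*(fps_nth b 2)^2) + 4*fps_nth a 4*(fps_nth b 1)^3*fps_nth b 2 + fps_nth a 5*(fps_nth b 1)^5"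
  unfolding fps_compose_nth sum_upto5
  apply (simp_all only: power_0 power_one_right fps_one_nth pow2_nth[OF assms] pow3_nth[OF assms] pow4_nth[OF assms] pow5_nth[OF assms] assms fps_mult_nth_0 mult_zero_left mult_zero_right add_0_left add_0_right)
  by (simp_all add: algebra_simps)


definition KK :: "real \<Rightarrow> complex" where "KK m = inverse ((complex_of_real m)^2)"
definition G1 :: "real \<Rightarrow> complex fps" where "G1 m = fps_const (KK m) * fps_X^2"
definition Wf :: "real \<Rightarrow> complex fps" where "Wf m = fps_const (complex_of_real m) * (fps_binomial (1/2) oo G1 m)"
definition Df :: "real \<Rightarrow> complex fps" where "Df m = Wf m - fps_const (complex_of_real m)"

lemma G1_nth: "fps_nth (G1 m) 0 = 0" "fps_nth (G1 m) 1 = 0" "fps_nth (G1 m) 2 = KK m"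
  "fps_nth (G1 m) 3 = 0" "fps_nth (G1 m) 4 = 0" "fps_nth (G1 m) 5 = 0"
  by (simp_all add: G1_def fps_X_power_nth)

lemma gb: "((1/2::complex) gchoose 1) = 1/2" "((1/2::complex) gchoose 2) = -1/8"
   "((-1/2::complex) gchoose 1) = -1/2" "((-1/2::complex) gchoose 2) = 3/8"
   "((-(1/2)::complex) gchoose 1) = -1/2" "((-(1/2)::complex) gchoose 2) = 3/8"
  by (simp_all add: gbinomial_Suc eval_nat_numeral)

lemma Wf_nth: "fps_nth (Wf m) 0 = of_real m" "fps_nth (Wf m) 1 = 0" "fps_nth (Wf m) 2 = of_real m * KK m / 2"
  "fps_nth (Wf m) 3 = 0" "fps_nth (Wf m) 4 = - of_real m * (KK m)^2 / 8" "fps_nth (Wf m) 5 = 0"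
  by (simp_all add: Wf_def compose_nth_small compose_nth_small[unfolded One_nat_def] G1_nth G1_nth[unfolded One_nat_def] gb)


lemmas CN = compose_nth_small compose_nth_small[unfolded One_nat_def] mult_nth_small mult_nth_small[unfolded One_nat_def]
  G1_nth G1_nth[unfolded One_nat_def] Wf_nth Wf_nth[unfolded One_nat_def] gb

lemma Df_nth: "fps_nth (Df m) 0 = 0" "fps_nth (Df m) 1 = 0" "fps_nth (Df m) 2 = of_real m * KK m / 2"
  "fps_nth (Df m) 3 = 0" "fps_nth (Df m) 4 = - of_real m * (KK m)^2 / 8" "fps_nth (Df m) 5 = 0"
  by (simp_all add: Df_def CN)

lemmas CN2 = CN Df_nth Df_nth[unfolded One_nat_def]

definition CDf where "CDf m = fps_cos 1 oo Df m"
definition SDf where "SDf m = fps_sin 1 oo Df m"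

lemma fps_sc_nth: "fps_nth (fps_sin (1::complex)) 2 = 0" "fps_nth (fps_sin (1::complex)) 3 = -1/6"
  "fps_nth (fps_sin (1::complex)) 4 = 0" "fps_nth (fps_sin (1::complex)) 5 = 1/120"
  "fps_nth (fps_cos (1::complex)) 2 = -1/2" "fps_nth (fps_cos (1::complex)) 3 = 0"
  "fps_nth (fps_cos (1::complex)) 4 = 1/24" "fps_nth (fps_cos (1::complex)) 5 = 0"
  by (simp_all add: fps_sin_def fps_cos_def fact_numeral)

lemma CDf_nth: "fps_nth (CDf m) 0 = 1" "fps_nth (CDf m) 1 = 0" "fps_nth (CDf m) 2 = 0"
  "fps_nth (CDf m) 3 = 0" "fps_nth (CDf m) 4 = - ((of_real m * KK m)^2) / 8" "fps_nth (CDf m) 5 = 0"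
  by (simp_all add: CDf_def CN2 fps_sc_nth power2_eq_square)

lemma SDf_nth: "fps_nth (SDf m) 0 = 0" "fps_nth (SDf m) 1 = 0" "fps_nth (SDf m) 2 = of_real m * KK m / 2"
  "fps_nth (SDf m) 3 = 0" "fps_nth (SDf m) 4 = - of_real m * (KK m)^2 / 8" "fps_nth (SDf m) 5 = 0"
  by (simp_all add: SDf_def CN2 fps_sc_nth)


lemmas CN3 = CN2 CDf_nth CDf_nth[unfolded One_nat_def] SDf_nth SDf_nth[unfolded One_nat_def]

definition Sf where "Sf m = fps_const (sin (complex_of_real m)) * CDf m + fps_const (cos (complex_of_real m)) * SDf m"
definition Cf where "Cf m = fps_const (cos (complex_of_real m)) * CDf m - fps_const (sin (complex_of_real m)) * SDf m"

lemma Sf_nth: "fps_nth (Sf m) 0 = sin (of_real m)" "fps_nth (Sf m) 1 = 0" "fps_nth (Sf m) 3 = 0" "fps_nth (Sf m) 5 = 0"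
  by (simp_all add: Sf_def CN3)
lemma Cf_nth: "fps_nth (Cf m) 0 = cos (of_real m)" "fps_nth (Cf m) 1 = 0" "fps_nth (Cf m) 3 = 0" "fps_nth (Cf m) 5 = 0"
  by (simp_all add: Cf_def CN3)

definition Uf where "Uf m = fps_const (KK m) * (fps_X^2 * (Cf m * Cf m))"
lemma Uf_nth: "fps_nth (Uf m) 0 = 0" "fps_nth (Uf m) 1 = 0" "fps_nth (Uf m) 2 = KK m * (fps_nth (Cf m) 0)^2"
  "fps_nth (Uf m) 3 = 0" "fps_nth (Uf m) 4 = KK m * (2 * fps_nth (Cf m) 0 * fps_nth (Cf m) 2)" "fps_nth (Uf m) 5 = 0"
  by (simp_all add: Uf_def CN3 Cf_nth Cf_nth[unfolded One_nat_def] fps_X_power_nth power2_eq_square)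

definition Rf where "Rf m = fps_binomial (-1/2) oo Uf m"
lemma Rf_nth: "fps_nth (Rf m) 0 = 1" "fps_nth (Rf m) 1 = 0" "fps_nth (Rf m) 2 = -1/2 * fps_nth (Uf m) 2"
  "fps_nth (Rf m) 3 = 0" "fps_nth (Rf m) 4 = -1/2 * fps_nth (Uf m) 4 + 3/8 * (fps_nth (Uf m) 2)^2" "fps_nth (Rf m) 5 = 0"
  by (simp_all add: Rf_def CN3 Uf_nth(1,2,4,6) Uf_nth(2)[unfolded One_nat_def])

definition Qf where "Qf m = fps_const (inverse (complex_of_real m)) * (fps_X * (Sf m * Rf m))"
lemma Qf_nth: "fps_nth (Qf m) 0 = 0" "fps_nth (Qf m) 1 = inverse (of_real m) * fps_nth (Sf m) 0"
  "fps_nth (Qf m) 2 = 0"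
  "fps_nth (Qf m) 3 = inverse (of_real m) * (fps_nth (Sf m) 0 * fps_nth (Rf m) 2 + fps_nth (Sf m) 2)"
  "fps_nth (Qf m) 4 = 0"
  "fps_nth (Qf m) 5 = inverse (of_real m) * (fps_nth (Sf m) 0 * fps_nth (Rf m) 4 + fps_nth (Sf m) 2 * fps_nth (Rf m) 2 + fps_nth (Sf m) 4)"
  by (simp_all add: Qf_def CN3 Sf_nth Sf_nth[unfolded One_nat_def] Rf_nth Rf_nth[unfolded One_nat_def] fps_X_nth)

definition AT :: "complex fps" where "AT = Abs_fps (\<lambda>n. if odd n then -\<i>*\<i>^n / of_nat n else 0)"
lemma ipow: "\<i>^3 = -\<i>" "\<i>^5 = \<i>" by (simp_all add: eval_nat_numeral)

lemma AT_nth: "fps_nth AT 1 = 1" "fps_nth AT 2 = 0" "fps_nth AT 3 = -1/3" "fps_nth AT 4 = 0" "fps_nth AT 5 = 1/5"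
  by (simp_all add: AT_def ipow)

definition Th where "Th m = AT oo Qf m"
lemma Th_nth: "fps_nth (Th m) 3 = fps_nth (Qf m) 3 - (fps_nth (Qf m) 1)^3 / 3"
  "fps_nth (Th m) 5 = fps_nth (Qf m) 5 - (fps_nth (Qf m) 1)^2 * fps_nth (Qf m) 3 + (fps_nth (Qf m) 1)^5 / 5"
  by (simp_all add: Th_def CN3 Qf_nth AT_nth AT_nth[unfolded One_nat_def] Qf_nth(2)[unfolded One_nat_def] Qf_nth(1))


lemma Sf_nth2: "fps_nth (Sf m) 2 = cos (of_real m) * (of_real m * KK m / 2)"
  "fps_nth (Sf m) 4 = sin (of_real m) * (- ((of_real m * KK m)^2) / 8) + cos (of_real m) * (- of_real m * (KK m)^2 / 8)"
  by (simp_all add: Sf_def CN3)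
lemma Cf_nth2: "fps_nth (Cf m) 2 = - (sin (of_real m) * (of_real m * KK m / 2))"
  by (simp_all add: Cf_def CN3)

definition T3 :: "real \<Rightarrow> real" where
  "T3 m = 3 * cos m / m^2 - 3 * sin m * (cos m)^2 / m^3 - 2 * (sin m)^3 / m^3"
definition T5 :: "real \<Rightarrow> real" where
  "T5 m = -15 * cos m / m^4 - 30 * (cos m)^3 / m^4 - 15 * sin m / m^3 + 45 * sin m * (cos m)^4 / m^5 + 60 * (sin m)^3 * (cos m)^2 / m^5 + 24 * (sin m)^5 / m^5"

lemma Th3: assumes "m \<noteq> 0" shows "fact 3 * fps_nth (Th m) 3 = of_real (T3 m)"
proof -
  have M: "complex_of_real m \<noteq> 0" using assms by simp
  show ?thesis using M
    apply (simp add: Th_nth Qf_nth Qf_nth[unfolded One_nat_def] Rf_nth Uf_nth Sf_nth Cf_nth Sf_nth2 Cf_nth2 KK_def T3_def sin_of_real[symmetric] cos_of_real[symmetric] field_simps fact_numeral)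
    apply (thin_tac _) by algebra
qed

lemma Th5: assumes "m \<noteq> 0" shows "fact 5 * fps_nth (Th m) 5 = of_real (T5 m)"
proof -
  have M: "complex_of_real m \<noteq> 0" using assms by simp
  show ?thesis using M
    apply (simp add: Th_nth Qf_nth Qf_nth[unfolded One_nat_def] Rf_nth Uf_nth Sf_nth Cf_nth Sf_nth2 Cf_nth2 KK_def T5_def sin_of_real[symmetric] cos_of_real[symmetric] field_simps fact_numeral)
    apply (thin_tac _) by algebra
qed


definition wc :: "real \<Rightarrow> complex \<Rightarrow> complex" where
  "wc m z = complex_of_real m * (1 + KK m * z^2) powr (1/2)"
definition dc where "dc m z = wc m z - complex_of_real m"
definition swc where "swc m z = sin (complex_of_real m) * cos (dc m z) + cos (complex_of_real m) * sin (dc m z)"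
definition cwc where "cwc m z = cos (complex_of_real m) * cos (dc m z) - sin (complex_of_real m) * sin (dc m z)"
definition uc where "uc m z = KK m * (z^2 * (cwc m z * cwc m z))"
definition rc where "rc m z = (1 + uc m z) powr (-1/2)"
definition Fc where "Fc m z = Arctan (inverse (complex_of_real m) * (z * (swc m z * rc m z)))"

lemma exp_G1: "(\<lambda>z. KK m * z^2) has_fps_expansion G1 m"
  unfolding G1_def by (intro fps_expansion_intros)

lemma exp_wc: "wc m has_fps_expansion Wf m"
proof -
  have "((\<lambda>x. (1+x) powr (1/2)) \<circ> (\<lambda>z. KK m * z^2)) has_fps_expansion (fps_binomial (1/2) oo G1 m)"
    by (intro has_fps_expansion_compose exp_G1 has_fps_expansion_binomial_complex) (simp add: G1_nth)
  from has_fps_expansion_cmult_left[OF this, of "complex_of_real m"]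
  show ?thesis unfolding Wf_def by (simp add: o_def wc_def[abs_def])
qed

lemma exp_dc: "dc m has_fps_expansion Df m"
  using has_fps_expansion_diff[OF exp_wc has_fps_expansion_const[of "complex_of_real m"]]
  unfolding Df_def by (simp add: dc_def[abs_def])

lemma exp_cos_dc: "(\<lambda>z. cos (dc m z)) has_fps_expansion CDf m"
proof -
  have "((\<lambda>x. cos x) \<circ> dc m) has_fps_expansion CDf m"
    unfolding CDf_def by (intro has_fps_expansion_compose exp_dc has_fps_expansion_cos') (simp add: Df_nth)
  thus ?thesis by (simp add: o_def)
qed

lemma exp_sin_dc: "(\<lambda>z. sin (dc m z)) has_fps_expansion SDf m"
proof -
  have "((\<lambda>x. sin x) \<circ> dc m) has_fps_expansion SDf m"
    unfolding SDf_def by (intro has_fps_expansion_compose exp_dc has_fps_expansion_sin') (simp add: Df_nth)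
  thus ?thesis by (simp add: o_def)
qed

lemma exp_swc: "swc m has_fps_expansion Sf m"
  unfolding Sf_def swc_def[abs_def]
  by (intro fps_expansion_intros exp_cos_dc exp_sin_dc)

lemma exp_cwc: "cwc m has_fps_expansion Cf m"
  unfolding Cf_def cwc_def[abs_def]
  by (intro fps_expansion_intros exp_cos_dc exp_sin_dc)

lemma exp_uc: "uc m has_fps_expansion Uf m"
  unfolding Uf_def uc_def[abs_def]
  by (intro fps_expansion_intros exp_cwc)

lemma exp_rc: "rc m has_fps_expansion Rf m"
proof -
  have "((\<lambda>x. (1+x) powr (-1/2)) \<circ> uc m) has_fps_expansion (fps_binomial (-1/2) oo Uf m)"
    by (intro has_fps_expansion_compose exp_uc has_fps_expansion_binomial_complex) (simp add: Uf_nth)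
  thus ?thesis unfolding Rf_def by (simp add: o_def rc_def[abs_def])
qed

lemma exp_Arctan: "Arctan has_fps_expansion AT"
proof (rule has_fps_expansionI)
  have "eventually (\<lambda>z::complex. z \<in> ball 0 1) (nhds 0)"
    by (intro eventually_nhds_in_open) auto
  thus "eventually (\<lambda>u. (\<lambda>n. fps_nth AT n * u ^ n) sums Arctan u) (nhds 0)"
    by eventually_elim (use Arctan_series(1) in \<open>auto simp: AT_def\<close>)
qed

lemma exp_Fc: "Fc m has_fps_expansion Th m"
proof -
  have q: "(\<lambda>z. inverse (complex_of_real m) * (z * (swc m z * rc m z))) has_fps_expansion Qf m"
    unfolding Qf_def by (intro fps_expansion_intros exp_swc exp_rc)
  have "(Arctan \<circ> (\<lambda>z. inverse (complex_of_real m) * (z * (swc m z * rc m z)))) has_fps_expansion Th m"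
    unfolding Th_def by (intro has_fps_expansion_compose q exp_Arctan) (simp add: Qf_nth)
  thus ?thesis by (simp add: o_def Fc_def[abs_def])
qed


lemma sqrt_fact: assumes "m > 0" "a \<ge> 0" shows "m * (1 + a / m^2) powr (1/2) = sqrt (m^2 + a)"
proof -
  have "1 + a/m^2 \<ge> 0" using assms by simp
  hence "(1 + a / m^2) powr (1/2) = sqrt (1 + a/m^2)" by (simp add: powr_half_sqrt)
  also have "m * \<dots> = sqrt (m^2 * (1 + a/m^2))" using assms by (simp add: real_sqrt_mult)
  also have "m^2 * (1 + a/m^2) = m^2 + a" using assms by (simp add: field_simps)
  finally show ?thesis .
qed

lemma powr_c: assumes "b \<ge> 0" "c \<in> \<real>" shows "(1 + complex_of_real b) powr (c::complex) = complex_of_real ((1+b) powr (Re c))"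
proof -
  have "(1 + complex_of_real b) = complex_of_real (1+b)" by simp
  moreover have "c = complex_of_real (Re c)" using assms(2) by (simp add: complex_is_Real_iff complex_eq_iff)
  ultimately show ?thesis using assms by (metis powr_of_real add_nonneg_nonneg zero_le_one)
qed

lemma real_form: assumes m: "m > 0" shows "Fc m (complex_of_real x) = complex_of_real (theta x m)"
proof -
  define w where "w = omega x m"
  have K: "KK m * (complex_of_real x)^2 = complex_of_real (x^2/m^2)"
    by (simp add: KK_def field_simps)
  have wc: "wc m (complex_of_real x) = complex_of_real w"
  proof -
    have "wc m (complex_of_real x) = complex_of_real m * complex_of_real ((1 + x^2/m^2) powr (1/2))"
      unfolding wc_def K by (subst powr_c) auto
    also have "\<dots> = complex_of_real (m * (1 + x^2/m^2) powr (1/2))" by simp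
    also have "m * (1 + x^2/m^2) powr (1/2) = w" unfolding w_def omega_def using m by (simp add: sqrt_fact)
    finally show ?thesis .
  qed
  have dc: "dc m (complex_of_real x) = complex_of_real (w - m)" by (simp add: dc_def wc)
  have sw: "swc m (complex_of_real x) = complex_of_real (sin w)"
  proof -
    have "sin w = sin (m + (w - m))" by simp
    also have "\<dots> = sin m * cos (w - m) + cos m * sin (w - m)" by (rule sin_add)
    finally show ?thesis by (simp add: swc_def dc sin_of_real cos_of_real del: of_real_diff)
  qed
  have cw: "cwc m (complex_of_real x) = complex_of_real (cos w)"
  proof -
    have "cos w = cos (m + (w - m))" by simp
    also have "\<dots> = cos m * cos (w - m) - sin m * sin (w - m)" by (rule cos_add)
    finally show ?thesis by (simp add: cwc_def dc sin_of_real cos_of_real del: of_real_diff) (simp only: of_real_diff of_real_mult)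
  qed
  define a where "a = x^2 * (cos w)^2"
  have a0: "a \<ge> 0" by (simp add: a_def)
  have uc: "uc m (complex_of_real x) = complex_of_real (a / m^2)"
    by (simp add: uc_def cw KK_def a_def field_simps power2_eq_square)
  have rc: "rc m (complex_of_real x) = complex_of_real (1 / sqrt (m^2 + a) * m)"
  proof -
    have "rc m (complex_of_real x) = complex_of_real ((1 + a/m^2) powr (-1/2))"
      unfolding rc_def uc by (subst powr_c) (use a0 m in auto)
    also have "(1 + a/m^2) powr (-1/2) = inverse ((1 + a/m^2) powr (1/2))"
      by (simp add: powr_minus[symmetric])
    also have "(1 + a/m^2) powr (1/2) = sqrt (m^2 + a) / m" using sqrt_fact[OF m a0] m by (simp add: field_simps)
    finally show ?thesis by simp
  qed
  have "Fc m (complex_of_real x) = Arctan (complex_of_real (x * sin w / sqrt (m^2 + a)))"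
    unfolding Fc_def sw rc using m by (simp add: field_simps)
  also have "\<dots> = complex_of_real (theta x m)"
    unfolding Arctan_of_real theta_def w_def a_def ..
  finally show ?thesis .
qed


lemma higher_deriv_real:
  fixes G :: "complex \<Rightarrow> complex" and g :: "real \<Rightarrow> real"
  assumes hol: "G holomorphic_on ball 0 r"
    and eq: "\<And>x. \<bar>x\<bar> < r \<Longrightarrow> G (of_real x) = of_real (g x)"
  shows "\<bar>x\<bar> < r \<Longrightarrow> (deriv ^^ n) G (of_real x) = of_real ((deriv ^^ n) g x)"
proof (induction n arbitrary: x)
  case 0
  then show ?case using eq by simp
next
  case (Suc n)
  define H where "H = (deriv ^^ n) G"
  define h where "h = (deriv ^^ n) g"
  have holH: "H holomorphic_on ball 0 r" unfolding H_def by (intro holomorphic_higher_deriv hol) auto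
  have xin: "complex_of_real x \<in> ball 0 r" using Suc.prems by simp
  define H' where "H' = deriv H (of_real x)"
  have dH: "(H has_field_derivative H') (at (of_real x))"
    unfolding H'_def by (rule holomorphic_derivI[OF holH]) (use xin in auto)
  have D1: "((\<lambda>t. H (of_real t)) has_vector_derivative H') (at x)"
    by (rule has_vector_derivative_real_field[OF dH])
  have D2: "((\<lambda>t. complex_of_real (h t)) has_vector_derivative H') (at x)"
  proof (rule has_vector_derivative_transform_within_open[OF D1, of "{t. \<bar>t\<bar> < r}"])
    show "open {t::real. \<bar>t\<bar> < r}" by (simp add: open_Collect_less continuous_intros)
    show "x \<in> {t. \<bar>t\<bar> < r}" using Suc.prems by simp
    show "\<And>y. y \<in> {t. \<bar>t\<bar> < r} \<Longrightarrow> H (complex_of_real y) = complex_of_real (h y)"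
      using Suc.IH unfolding H_def h_def by auto
  qed
  have D3: "(h has_real_derivative Re H') (at x)"
    using has_field_derivative_Re[OF D2] by simp
  have D4: "((\<lambda>t. complex_of_real (h t)) has_vector_derivative complex_of_real (Re H')) (at x)"
    by (rule has_vector_derivative_of_real[OF D3])
  have HH: "H' = complex_of_real (Re H')" by (rule vector_derivative_unique_at[OF D2 D4])
  have "deriv h x = Re H'" by (rule DERIV_imp_deriv[OF D3])
  thus ?case using HH unfolding H'_def H_def h_def by simp
qed

lemma dtheta0_eq: assumes m: "m > 0"
  shows "complex_of_real (dtheta0 n m) = fact n * fps_nth (Th m) n"
proof -
  obtain s where s: "open s" "0 \<in> s" "Fc m holomorphic_on s"
    using has_fps_expansion_imp_holomorphic[OF exp_Fc[of m]] by metis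
  obtain r where r: "r > 0" "ball 0 r \<subseteq> s" using s(1,2) open_contains_ball by blast
  have hol: "Fc m holomorphic_on ball 0 r" using s(3) r(2) by (rule holomorphic_on_subset)
  have "(deriv ^^ n) (Fc m) (of_real 0) = of_real ((deriv ^^ n) (\<lambda>x. theta x m) 0)"
    by (rule higher_deriv_real[OF hol]) (use real_form[OF m] r in auto)
  moreover have "fps_nth (Th m) n = (deriv ^^ n) (Fc m) 0 / fact n"
    by (rule fps_nth_fps_expansion[OF exp_Fc])
  ultimately show ?thesis by (simp add: dtheta0_def)
qed

lemma dtheta0_3: "m > 0 \<Longrightarrow> dtheta0 3 m = T3 m"
  using dtheta0_eq[of m 3] Th3[of m] by (simp del: of_real_eq_iff) (metis of_real_eq_iff)

lemma dtheta0_5: "m > 0 \<Longrightarrow> dtheta0 5 m = T5 m"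
  using dtheta0_eq[of m 5] Th5[of m] by (simp del: of_real_eq_iff) (metis of_real_eq_iff)


definition gg :: "real \<Rightarrow> real" where "gg m = 3*m*cos m - sin m * (2 + (cos m)^2)"

lemma T3_gg: assumes "m > 0" shows "T3 m = gg m / m^3"
proof -
  have s3: "(sin m)^3 = sin m * (1 - (cos m)^2)"
    using sin_cos_squared_add[of m] by algebra
  have "T3 m = (3*m*cos m - 3 * sin m*(cos m)^2 - 2 * (sin m)^3) / m^3"
    using assms unfolding T3_def by (simp add: field_simps power2_eq_square power3_eq_cube)
  also have "3*m*cos m - 3 * sin m*(cos m)^2 - 2 * (sin m)^3 = gg m"
    unfolding gg_def s3 by (simp add: algebra_simps)
  finally show ?thesis .
qed

lemma gg_deriv: "(gg has_real_derivative 3 * sin m * (sin m * cos m - m)) (at m)"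
proof -
  have d: "(gg has_real_derivative (3 * cos m + 3 * m * (- sin m) - (cos m * (2 + (cos m)^2) + sin m * (2 * cos m * (- sin m))))) (at m)"
    unfolding gg_def[abs_def] by (auto intro!: derivative_eq_intros simp: power2_eq_square algebra_simps)
  have "3 * cos m + 3 * m * (- sin m) - (cos m * (2 + (cos m)^2) + sin m * (2 * cos m * (- sin m))) = 3 * sin m * (sin m * cos m - m)"
    using sin_cos_squared_add[of m] by algebra
  with d show ?thesis by simp
qed

lemma sc_lt: fixes m :: real assumes "m > 0" shows "sin m * cos m < m"
proof (cases "m \<le> 1/2")
  case True
  have mpi: "m < pi" using True pi_gt3 by linarith
  have s: "sin m > 0" using assms mpi by (rule sin_gt_zero)
  have c: "cos m < 1" using cos_monotone_0_pi[of 0 m] assms mpi by simp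
  have "sin m * cos m < sin m" using s c by simp
  also have "sin m \<le> m" using assms by (simp add: sin_x_le_x)
  finally show ?thesis .
next
  case False
  have "sin m * cos m = sin (2*m) / 2" by (simp add: sin_double)
  also have "\<dots> \<le> 1/2" by simp
  finally show ?thesis using False by simp
qed

lemma sign_sin: assumes "real n * pi < m" "m < (real n + 1) * pi" shows "(-1)^n * sin m > 0"
proof -
  have "sin (m - real n * pi) = (-1)^n * sin m" by (simp add: sin_diff)
  moreover have "sin (m - real n * pi) > 0" by (rule sin_gt_zero) (use assms in \<open>auto simp: algebra_simps\<close>)
  ultimately show ?thesis by simp
qed

lemma gg_cont: "continuous_on A gg"
  unfolding gg_def[abs_def] by (intro continuous_intros)

lemma gg_decr: assumes "real n * pi \<le> a" "a < b" "b \<le> (real n + 1) * pi" "0 \<le> a"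
  shows "(-1)^n * gg b < (-1)^n * gg a"
proof (rule DERIV_neg_imp_decreasing_open[OF assms(2)])
  fix x assume x: "a < x" "x < b"
  have "((\<lambda>x. (-1)^n * gg x) has_real_derivative (-1)^n * (3 * sin x * (sin x * cos x - x))) (at x)"
    by (intro DERIV_cmult gg_deriv)
  moreover have "(-1)^n * (3 * sin x * (sin x * cos x - x)) < 0"
  proof -
    have "(-1)^n * sin x > 0" by (rule sign_sin) (use x assms in auto)
    moreover have "sin x * cos x - x < 0" using sc_lt[of x] x assms by simp
    ultimately have "((-1)^n * sin x) * (sin x * cos x - x) < 0" by (simp add: mult_pos_neg)
    thus ?thesis by (simp add: algebra_simps)
  qed
  ultimately show "\<exists>y. ((\<lambda>x. (-1)^n * gg x) has_real_derivative y) (at x) \<and> y < 0" by blast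
next
  show "continuous_on {a..b} (\<lambda>x. (-1)^n * gg x)" by (intro continuous_intros gg_cont)
qed

lemma gg_npi: "gg (real n * pi) = 3 * real n * pi * (-1)^n"
  by (simp add: gg_def power_mult_distrib[symmetric] flip: power_mult)

lemma gg_neg_small: assumes "0 < m" "m \<le> pi" shows "gg m < 0"
  using gg_decr[of 0 0 m] assms by (simp add: gg_def)


lemma zero_ex1: assumes k: "k \<ge> 1"
  shows "\<exists>!m. real k * pi < m \<and> m < (real k + 1) * pi \<and> gg m = 0"
proof -
  define f where "f x = (-1)^k * gg x" for x
  have fa: "f (real k * pi) = 3 * real k * pi" unfolding f_def gg_npi
    by (simp add: mult.assoc[symmetric] flip: power_add)
  have fa': "f (real k * pi) > 0" using fa k by simp
  have fb: "f ((real k + 1) * pi) = - 3 * (real k + 1) * pi"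
  proof -
    have g: "gg ((real k + 1) * pi) = 3 * (real k + 1) * pi * (-1)^(Suc k)"
      using gg_npi[of "Suc k"] by (simp add: add.commute)
    have "(-1::real)^k * (-1)^(Suc k) = -1" by (simp add: flip: power_add)
    thus ?thesis unfolding f_def g by (simp add: algebra_simps)
  qed
  have fb': "f ((real k + 1) * pi) < 0"
  proof -
    have "0 < 3 * (real k + 1) * pi" by simp
    thus ?thesis unfolding fb by linarith
  qed
  have cont: "continuous_on {real k * pi .. (real k + 1) * pi} f"
    unfolding f_def by (intro continuous_intros gg_cont)
  obtain x where x: "real k * pi \<le> x" "x \<le> (real k + 1) * pi" "f x = 0"
    using IVT2'[of f "(real k + 1) * pi" 0 "real k * pi", OF _ _ _ cont] fa' fb' by (auto simp: algebra_simps)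
  have x1: "x \<noteq> real k * pi" using x fa' by auto
  have x2: "x \<noteq> (real k + 1) * pi" using x fb' by auto
  have ex: "real k * pi < x \<and> x < (real k + 1) * pi \<and> gg x = 0" using x x1 x2 by (auto simp: f_def)
  have uniq: "y = x" if y: "real k * pi < y" "y < (real k + 1) * pi" "gg y = 0" for y
  proof (rule ccontr)
    assume "y \<noteq> x"
    hence "y < x \<or> x < y" by auto
    thus False
    proof
      assume "y < x"
      have kp: "0 \<le> real k * pi" by simp
      from gg_decr[of k y x] have "(-1)^k * gg x < (-1)^k * gg y" using y ex \<open>y < x\<close> kp by (auto intro: less_imp_le)
      thus False using y ex by simp
    next
      assume "x < y"
      have kp: "0 \<le> real k * pi" by simp
      from gg_decr[of k x y] have "(-1)^k * gg y < (-1)^k * gg x" using y ex \<open>x < y\<close> kp by (auto intro: less_imp_le)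
      thus False using y ex by simp
    qed
  qed
  show ?thesis using ex uniq by blast
qed

definition mk :: "nat \<Rightarrow> real" where
  "mk k = (if k = 0 then 0 else THE m. real k * pi < m \<and> m < (real k + 1) * pi \<and> gg m = 0)"

lemma mk_prop: assumes "k \<ge> 1" shows "real k * pi < mk k" "mk k < (real k + 1) * pi" "gg (mk k) = 0"
proof -
  have "real k * pi < mk k \<and> mk k < (real k + 1) * pi \<and> gg (mk k) = 0"
    unfolding mk_def using assms theI'[OF zero_ex1[OF assms]] by auto
  thus "real k * pi < mk k" "mk k < (real k + 1) * pi" "gg (mk k) = 0" by auto
qed

lemma mk_unique: assumes "k \<ge> 1" "real k * pi < m" "m < (real k + 1) * pi" "gg m = 0" shows "m = mk k"
  using zero_ex1[OF assms(1)] mk_prop[OF assms(1)] assms(2-) by blast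

lemma Sigma_gg: "Sigma_set = {m. 0 < m \<and> gg m = 0}"
proof -
  have "dtheta0 3 m = 0 \<longleftrightarrow> gg m = 0" if "m > 0" for m
    using that by (simp add: dtheta0_3 T3_gg)
  thus ?thesis unfolding Sigma_set_def by auto
qed

lemma Sigma_mk: "m \<in> Sigma_set \<longleftrightarrow> (\<exists>k\<ge>1. m = mk k)"
proof
  assume "\<exists>k\<ge>1. m = mk k"
  then obtain k where k: "k \<ge> 1" "m = mk k" by blast
  have "0 < real k * pi" using k by simp
  hence "0 < mk k" using mk_prop(1)[OF k(1)] by linarith
  thus "m \<in> Sigma_set" using mk_prop[OF k(1)] k by (auto simp: Sigma_gg)
next
  assume "m \<in> Sigma_set"
  hence m: "m > 0" "gg m = 0" by (auto simp: Sigma_gg)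
  define k where "k = nat \<lfloor>m / pi\<rfloor>"
  have fl: "0 \<le> \<lfloor>m / pi\<rfloor>" using m by simp
  have rk: "real k = of_int \<lfloor>m / pi\<rfloor>" unfolding k_def using fl by simp
  have "real k \<le> m / pi" unfolding rk by simp
  hence lo: "real k * pi \<le> m" by (simp add: field_simps)
  have "m / pi < real k + 1" unfolding rk by linarith
  hence hi: "m < (real k + 1) * pi" by (simp add: field_simps)
  have k1: "k \<ge> 1"
  proof (rule ccontr)
    assume "\<not> k \<ge> 1"
    hence "k = 0" by simp
    hence "m < pi" using hi by simp
    hence "gg m < 0" using m by (intro gg_neg_small) auto
    thus False using m by simp
  qed
  have "m \<noteq> real k * pi"
  proof
    assume "m = real k * pi"
    hence "gg m = 3 * real k * pi * (-1)^k" by (simp add: gg_npi)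
    moreover have "3 * real k * pi * (-1)^k \<noteq> 0" using k1 by simp
    ultimately show False using m by simp
  qed
  hence "real k * pi < m" using lo by simp
  thus "\<exists>k\<ge>1. m = mk k" using k1 hi m mk_unique by blast
qed


lemma mk_pos: "k \<ge> 1 \<Longrightarrow> real k * pi < mk k \<and> real k \<le> mk k \<and> pi < mk k"
proof -
  assume k: "k \<ge> 1"
  have a: "real k * pi < mk k" using mk_prop(1)[OF k] .
  have "real k \<le> real k * pi" using k pi_gt3 by simp
  moreover have "pi \<le> real k * pi" using k by simp
  ultimately show ?thesis using a by linarith
qed

lemma sc_sq: "(sin x)^2 \<le> 1" "(cos x)^2 \<le> (1::real)" "\<bar>sin x\<bar> \<le> 1" "\<bar>cos x\<bar> \<le> 1"
  by (simp_all add: abs_square_le_1 abs_sin_le_one abs_cos_le_one)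

lemma cos_small: assumes k: "k \<ge> 1" shows "\<bar>cos (mk k)\<bar> \<le> 1 / mk k"
proof -
  define m where "m = mk k"
  have m0: "m > 0" using mk_pos[OF k] pi_gt_zero unfolding m_def by linarith
  have e: "3 * m * cos m = sin m * (2 + (cos m)^2)" using mk_prop(3)[OF k] unfolding gg_def m_def by simp
  have "\<bar>sin m * (2 + (cos m)^2)\<bar> = \<bar>sin m\<bar> * (2 + (cos m)^2)" by (simp add: abs_mult)
  also have "\<dots> \<le> 1 * 3" by (intro mult_mono) (use sc_sq[of m] in auto)
  finally have "\<bar>3 * m * cos m\<bar> \<le> 3" using e by simp
  hence "3 * (m * \<bar>cos m\<bar>) \<le> 3" using m0 by (simp add: abs_mult)
  hence "m * \<bar>cos m\<bar> \<le> 1" by simp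
  thus ?thesis using m0 unfolding m_def[symmetric] by (simp add: field_simps)
qed

lemma sin_lower_pos: assumes "0 \<le> t" "t \<le> pi/2" "sin t < 1/2" shows "t \<le> 2 * sin t"
proof (cases "t \<le> pi/3")
  case True
  show ?thesis
  proof (cases "t = 0")
    case True thus ?thesis by simp
  next
    case False
    hence t0: "0 < t" using assms by simp
    have "(\<lambda>x. sin x - x/2) 0 < (\<lambda>x. sin x - x/2) t"
    proof (rule DERIV_pos_imp_increasing_open[OF t0])
      fix x assume x: "0 < x" "x < t"
      have "((\<lambda>x. sin x - x/2) has_real_derivative cos x - 1/2) (at x)"
        by (auto intro!: derivative_eq_intros)
      moreover have "cos x > cos (pi/3)" using cos_monotone_0_pi[of x "pi/3"] x True by simp
      ultimately show "\<exists>y. ((\<lambda>x. sin x - x/2) has_real_derivative y) (at x) \<and> y > 0"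
        by (auto simp: cos_60)
    next
      show "continuous_on {0..t} (\<lambda>x. sin x - x/2)" by (intro continuous_intros) auto
    qed
    thus ?thesis by simp
  qed
next
  case False
  have "sin t = cos (pi/2 - t)" by (simp add: cos_diff)
  also have "cos (pi/2 - t) \<ge> cos (pi/6)" using False assms by (intro cos_monotone_0_pi_le) auto
  finally have "sin t \<ge> sqrt 3 / 2" by (simp add: cos_30)
  moreover have "sqrt 3 \<ge> 1" by simp
  ultimately show ?thesis using assms by simp
qed

lemma sin_lower: assumes "\<bar>d\<bar> \<le> pi/2" "\<bar>sin d\<bar> < 1/2" shows "\<bar>d\<bar> \<le> 2 * \<bar>sin d\<bar>"
proof (cases "d \<ge> 0")
  case True
  have "sin d \<ge> 0" using True assms by (intro sin_ge_zero) auto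
  thus ?thesis using sin_lower_pos[of d] True assms by simp
next
  case False
  have "sin (-d) \<ge> 0" using False assms by (intro sin_ge_zero) auto
  thus ?thesis using sin_lower_pos[of "-d"] False assms by simp
qed

lemma d_bound: assumes k: "k \<ge> 1" shows "\<bar>mk k - (real k + 1/2) * pi\<bar> \<le> 1 / real k"
proof -
  define m where "m = mk k"
  define d where "d = m - (real k + 1/2) * pi"
  have mb: "real k * pi < m" "m < (real k + 1) * pi" using mk_prop[OF k] unfolding m_def by auto
  have e1: "(real k + 1)*pi = real k*pi + pi" by (simp add: algebra_simps)
  have e2: "(real k + 1/2)*pi = real k*pi + pi/2" by (simp add: algebra_simps)
  have dpi: "\<bar>d\<bar> \<le> pi/2" using mb unfolding d_def abs_le_iff e1 e2 by linarith
  have meq: "m = d + (real k * pi + pi/2)" unfolding d_def by (simp add: algebra_simps)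
  have cm: "cos m = - ((-1)^k * sin d)" unfolding meq by (simp add: cos_add sin_add)
  have sd: "\<bar>sin d\<bar> = \<bar>cos m\<bar>" unfolding cm by (simp add: abs_mult)
  have cs: "\<bar>cos m\<bar> \<le> 1 / m" using cos_small[OF k] unfolding m_def .
  have mp: "pi < m" "real k \<le> m" "real k * pi < m" using mk_pos[OF k] unfolding m_def by auto
  have "0 < m * pi" using mp pi_gt_zero by (intro mult_pos_pos) linarith+
  hence "1 / m < 1 / pi" using mp pi_gt_zero by (simp add: divide_simps)
  also have "1 / pi < 1 / 2" using pi_gt3 by simp
  finally have sd2: "\<bar>sin d\<bar> < 1/2" using sd cs by linarith
  have "\<bar>d\<bar> \<le> 2 * \<bar>sin d\<bar>" by (rule sin_lower[OF dpi sd2])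
  also have "\<dots> \<le> 2 / m" using sd cs by simp
  also have "2 / m \<le> 2 / (real k * pi)" using mp k by (intro divide_left_mono) auto
  also have "\<dots> \<le> 1 / real k" using k pi_gt3 by (simp add: field_simps)
  finally show ?thesis unfolding d_def m_def .
qed


lemma abs3: "\<bar>a + b + c\<bar> \<le> \<bar>a\<bar> + \<bar>b\<bar> + \<bar>c::real\<bar>"
  using abs_triangle_ineq[of "a+b" c] abs_triangle_ineq[of a b] by linarith

lemma abs_pow_le1: "\<bar>x\<bar> \<le> 1 \<Longrightarrow> \<bar>y\<bar> \<le> 1 \<Longrightarrow> \<bar>x^a * y^b\<bar> \<le> (1::real)"
  by (simp add: abs_mult power_abs mult_le_one power_le_one)

lemma T5_bound: assumes k: "k \<ge> 1"
  shows "\<bar>(mk k)^3 * T5 (mk k) - (-1)^(k+1) * 15\<bar> \<le> 189 / (real k)^2"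
proof -
  define m where "m = mk k"
  define s where "s = sin m"
  define c where "c = cos m"
  define \<sigma> where "\<sigma> = ((-1)::real)^k"
  have mp: "pi < m" "real k \<le> m" "real k * pi < m" using mk_pos[OF k] unfolding m_def by auto
  have m0: "m > 0" using mp pi_gt_zero by linarith
  have k0: "real k > 0" using k by simp
  have exp: "m^3 * T5 m = -15 * s + (-15 * c - 30 * c^3)/m + (45 * s * c^4 + 60 * s^3 * c^2 + 24 * s^5)/m^2"
  proof -
    have t: "m^3 * (X/m^4) = X/m" "m^3 * (X/m^3) = X" "m^3 * (X/m^5) = X/m^2" for X
      using m0 by (simp_all add: field_simps eval_nat_numeral)
    show ?thesis unfolding T5_def s_def c_def
      by (simp only: right_diff_distrib distrib_left t) (simp add: add_divide_distrib diff_divide_distrib algebra_simps)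
  qed
  have ss: "\<bar>s\<bar> \<le> 1" "\<bar>c\<bar> \<le> 1" unfolding s_def c_def using sc_sq by auto
  have cs: "\<bar>c\<bar> \<le> 1 / m" using cos_small[OF k] unfolding c_def m_def .
  have c2: "c^2 \<le> 1 / m^2"
  proof -
    have "c^2 = \<bar>c\<bar>^2" by simp
    also have "\<dots> \<le> (1/m)^2" using cs by (intro power_mono) auto
    finally show ?thesis by (simp add: power_divide)
  qed
  have sig: "\<sigma> * s > 0" unfolding \<sigma>_def s_def
    using sign_sin[of k m] mp mk_prop(2)[OF k] unfolding m_def by auto
  have sig2: "\<sigma>^2 = 1" "\<bar>\<sigma>\<bar> = 1" unfolding \<sigma>_def by (simp_all add: flip: power_mult)
  have scs: "s^2 + c^2 = 1" unfolding s_def c_def by simp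
  have E1: "\<bar>-15 * s - (-1)^(k+1) * 15\<bar> \<le> 15 / m^2"
  proof -
    have "-15 * s - (-1)^(k+1) * 15 = 15 * (\<sigma> * (1 - \<sigma> * s))"
      unfolding \<sigma>_def using sig2(1) unfolding \<sigma>_def by (simp add: algebra_simps power2_eq_square)
    moreover have ss1: "\<sigma> * s \<le> 1"
    proof -
      have "\<bar>\<sigma> * s\<bar> = \<bar>s\<bar>" by (simp add: abs_mult sig2(2))
      thus ?thesis using ss(1) abs_ge_self[of "\<sigma> * s"] by linarith
    qed
    moreover have "\<bar>1 - \<sigma> * s\<bar> = 1 - \<sigma> * s" using ss1 by simp
    ultimately have "\<bar>-15 * s - (-1)^(k+1) * 15\<bar> = 15 * (1 - \<sigma> * s)"
      by (simp add: abs_mult sig2(2))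
    also have "1 - \<sigma> * s \<le> 1 - (\<sigma> * s)^2"
    proof -
      have "\<sigma> * s \<le> 1" by (rule ss1)
      hence "(\<sigma> * s)^2 \<le> \<sigma> * s" using mult_left_mono[of "\<sigma> * s" 1 "\<sigma> * s"] sig by (simp add: power2_eq_square)
      thus ?thesis by simp
    qed
    also have "(\<sigma> * s)^2 = s^2" using sig2(1) by (simp add: power_mult_distrib)
    finally have "\<bar>-15 * s - (-1)^(k+1) * 15\<bar> \<le> 15 * c^2" using scs by simp
    thus ?thesis using c2 by simp
  qed
  have E2: "\<bar>(-15 * c - 30 * c^3)/m\<bar> \<le> 45 / m^2"
  proof -
    have "\<bar>-15 * c - 30 * c^3\<bar> \<le> 15 * \<bar>c\<bar> + 30 * \<bar>c\<bar>^3" by (simp add: abs_mult power_abs abs_triangle_ineq4[THEN order_trans])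
    also have "\<bar>c\<bar>^3 \<le> \<bar>c\<bar>"
    proof -
      have "\<bar>c\<bar>^3 = \<bar>c\<bar> * \<bar>c\<bar>^2" by (simp add: power3_eq_cube power2_eq_square)
      also have "\<dots> \<le> \<bar>c\<bar> * 1" using ss(2) by (intro mult_left_mono) (auto simp: abs_square_le_1)
      finally show ?thesis by simp
    qed
    hence "15 * \<bar>c\<bar> + 30 * \<bar>c\<bar>^3 \<le> 45 * \<bar>c\<bar>" by simp
    also have "\<dots> \<le> 45 / m" using cs by simp
    finally have "\<bar>-15 * c - 30 * c^3\<bar> \<le> 45 / m" .
    thus ?thesis using m0 by (simp add: abs_divide power2_eq_square divide_right_mono field_simps)
  qed
  have E3: "\<bar>(45 * s * c^4 + 60 * s^3 * c^2 + 24 * s^5)/m^2\<bar> \<le> 129 / m^2"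
  proof -
    have a: "\<bar>s^1 * c^4\<bar> \<le> 1" "\<bar>s^3 * c^2\<bar> \<le> 1" "\<bar>s^5 * c^0\<bar> \<le> 1" using ss by (intro abs_pow_le1; simp)+
    have "\<bar>45 * s * c^4 + 60 * s^3 * c^2 + 24 * s^5\<bar> \<le> 45 * \<bar>s^1 * c^4\<bar> + 60 * \<bar>s^3 * c^2\<bar> + 24 * \<bar>s^5 * c^0\<bar>"
      using abs3[of "45 * s * c^4" "60 * s^3 * c^2" "24 * s^5"] by (simp add: abs_mult)
    also have "\<dots> \<le> 129" using a by simp
    finally show ?thesis using m0 by (simp add: abs_divide divide_right_mono)
  qed
  have "\<bar>m^3 * T5 m - (-1)^(k+1) * 15\<bar> \<le> 15 / m^2 + 45 / m^2 + 129 / m^2"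
  proof -
    have "-15 * s + (-15 * c - 30 * c^3)/m + (45 * s * c^4 + 60 * s^3 * c^2 + 24 * s^5)/m^2 - (-1)^(k+1) * 15
      = (-15 * s - (-1)^(k+1) * 15) + (-15 * c - 30 * c^3)/m + (45 * s * c^4 + 60 * s^3 * c^2 + 24 * s^5)/m^2"
      by simp
    note eq = this
    show ?thesis unfolding exp eq by (rule order_trans[OF abs3 add_mono[OF add_mono[OF E1 E2] E3]])
  qed
  also have "\<dots> = 189 / m^2" by simp
  also have "\<dots> \<le> 189 / (real k)^2" using mp k0 by (intro divide_left_mono power_mono mult_pos_pos) auto
  finally show ?thesis unfolding m_def .
qed


theorem lemma5p2:
  shows "(\<forall>x\<in>Sigma_set. \<exists>e>0. Sigma_set \<inter> ball x e = {x}) \<and>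
    (\<exists>mk :: nat \<Rightarrow> real. strict_mono mk \<and> Sigma_set = mk ` {1..} \<and>
      (\<exists>(K::nat) (k0::int). K > 0 \<and>
         (\<exists>C. \<forall>k\<ge>K. \<bar>mk k - (real k + of_int k0 + 1/2) * pi\<bar> \<le> C / real k) \<and>
         (\<exists>C. \<forall>k\<ge>K. \<bar>(mk k)^3 * dtheta0 5 (mk k) - (-1) powi (int k + k0 + 1) * 15\<bar>
                 \<le> C / (real k)^2)) \<and>
      (\<exists>N. \<forall>k\<ge>N. dtheta0 5 (mk k) \<noteq> 0))"
  proof -
  have disc: "\<forall>x\<in>Sigma_set. \<exists>e>0. Sigma_set \<inter> ball x e = {x}"
  proof
    fix x assume x: "x \<in> Sigma_set"
    then obtain k where k: "k \<ge> 1" "x = mk k" using Sigma_mk by blast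
    define e where "e = min (x - real k * pi) ((real k + 1) * pi - x)"
    have e0: "e > 0" unfolding e_def using mk_prop[OF k(1)] k(2) by auto
    have "Sigma_set \<inter> ball x e = {x}"
    proof (intro equalityI subsetI)
      fix y assume y: "y \<in> Sigma_set \<inter> ball x e"
      hence yd: "\<bar>y - x\<bar> < e" by (auto simp: dist_real_def abs_minus_commute)
      have "real k * pi < y" "y < (real k + 1) * pi" using yd unfolding e_def by (auto simp: abs_less_iff)
      moreover have "gg y = 0" using y by (auto simp: Sigma_gg)
      ultimately have "y = mk k" using mk_unique[OF k(1)] by blast
      thus "y \<in> {x}" using k by simp
    next
      fix y assume "y \<in> {x}"
      thus "y \<in> Sigma_set \<inter> ball x e" using x e0 by auto
    qed
    thus "\<exists>e>0. Sigma_set \<inter> ball x e = {x}" using e0 by blast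
  qed
  have sm: "strict_mono mk"
    unfolding strict_mono_Suc_iff
  proof
    fix n
    show "mk n < mk (Suc n)"
    proof (cases "n = 0")
      case True
      have "0 < mk 1" using mk_pos[of 1] pi_gt_zero by auto
      thus ?thesis using True by (simp add: mk_def)
    next
      case False
      hence n1: "n \<ge> 1" by simp
      have "mk n < (real n + 1) * pi" using mk_prop(2)[OF n1] .
      also have "\<dots> = real (Suc n) * pi" by simp
      also have "\<dots> < mk (Suc n)" using mk_prop(1)[of "Suc n"] by simp
      finally show ?thesis .
    qed
  qed
  have img: "Sigma_set = mk ` {1..}"
    using Sigma_mk by (auto simp: image_iff)
  have b1: "\<forall>k\<ge>1. \<bar>mk k - (real k + of_int (0::int) + 1/2) * pi\<bar> \<le> 1 / real k"
    using d_bound by simp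
  have b2: "\<forall>k\<ge>1. \<bar>(mk k)^3 * dtheta0 5 (mk k) - (-1) powi (int k + (0::int) + 1) * 15\<bar> \<le> 189 / (real k)^2"
  proof (intro allI impI)
    fix k :: nat assume k: "k \<ge> 1"
    have "mk k > 0" using mk_pos[OF k] pi_gt_zero by linarith
    hence "dtheta0 5 (mk k) = T5 (mk k)" by (rule dtheta0_5)
    moreover have "(-1::real) powi (int k + (0::int) + 1) = (-1)^(k+1)"
    proof -
      have "int k + (0::int) + 1 = int (k+1)" by simp
      thus ?thesis by (simp only: power_int_of_nat)
    qed
    ultimately show "\<bar>(mk k)^3 * dtheta0 5 (mk k) - (-1) powi (int k + (0::int) + 1) * 15\<bar> \<le> 189 / (real k)^2"
      using T5_bound[OF k] by simp
  qed
  have nz: "\<forall>k\<ge>4. dtheta0 5 (mk k) \<noteq> 0"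
  proof (intro allI impI)
    fix k :: nat assume k4: "k \<ge> 4"
    hence k: "k \<ge> 1" by simp
    have mpos: "mk k > 0" using mk_pos[OF k] pi_gt_zero by linarith
    have "(real k)^2 \<ge> 4^2" using k4 by (intro power_mono) auto
    hence "189 / (real k)^2 \<le> 189 / 4^2" using k4 by (intro divide_left_mono) auto
    hence bd: "\<bar>(mk k)^3 * T5 (mk k) - (-1)^(k+1) * 15\<bar> < 15" using T5_bound[OF k] by simp
    have "\<bar>(-1::real)^(k+1) * 15\<bar> = 15" by (simp add: abs_mult)
    hence "(mk k)^3 * T5 (mk k) \<noteq> 0" using bd by auto
    thus "dtheta0 5 (mk k) \<noteq> 0" using dtheta0_5[OF mpos] by auto
  qed
  have X: "\<exists>(K::nat) (k0::int). K > 0 \<and>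
         (\<exists>C. \<forall>k\<ge>K. \<bar>mk k - (real k + of_int k0 + 1/2) * pi\<bar> \<le> C / real k) \<and>
         (\<exists>C. \<forall>k\<ge>K. \<bar>(mk k)^3 * dtheta0 5 (mk k) - (-1) powi (int k + k0 + 1) * 15\<bar>
                 \<le> C / (real k)^2)"
    apply (rule exI[of _ "1::nat"], rule exI[of _ "0::int"])
    using b1 b2 by blast
  show ?thesis using disc sm img X nz by blast
qed

end
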